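(* Let $f:(0,\infty)\to[1,\infty)$ be nondecreasing and ${\bf C}_0:(0,\infty)\to(0,\infty)$ be monotonically increasing. For an integer $p\ge2$ and $\xi>0$ define $$ {\bf C}(p,\xi)=\frac{{\bf C}_0(\xi)}{2\left[1-(1-p^{-f(\xi)})^{e^{\xi}}\right](1-p^{-f(\xi)})^{e^{\xi}}},\qquad {\bf C}(p)=\min_{\xi>0}{\bf C}(p,\xi), $$ and assume that for all sufficiently large $p$ there is $\xi_0=\xi_0(p)>0$ solving $\xi_0=\log\left[-\frac{\log 2}{\log(1-p^{-f(\xi_0)})}\right]$. Then: (1) if $\lim_{\xi\to\infty}\frac{f(\xi)\log{\bf C}_0(\xi)}{\xi}=0$, then ${\bf C}(p)$ is subexponential or polynomial in $\log p$, i.e. $\lim_{p\to\infty}\frac{\log{\bf C}(p)}{\log p}=0$; (2) in particular, if ${\bf C}_0(\xi)$ is polynomially bounded in $\xi$ and $f(\xi)$ scales sublinearly (i.e. $f(\xi)\le K\xi^{\beta}$ for some constants $K>0$ and $0\le\beta<1$), then ${\bf C}(p)$ is bounded by a polynomial in $\log p$.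
   Context: All logarithms are natural. "${\bf C}_0$ polynomially bounded" means ${\bf C}_0(\xi)\le K'\xi^{a}$ for some constants $K',a>0$ and all large $\xi$. *)

theory Defs
  imports "HOL-Analysis.Analysis"
begin

definition Cpx :: "(real \<Rightarrow> real) \<Rightarrow> (real \<Rightarrow> real) \<Rightarrow> nat \<Rightarrow> real \<Rightarrow> real" where
  "Cpx f C0 p \<xi> =
     C0 \<xi> / (2 * (1 - (1 - real p powr (- f \<xi>)) powr exp \<xi>)
              * (1 - real p powr (- f \<xi>)) powr exp \<xi>)"

text \<open>C(p) = min over xi > 0 of C(p,xi), rendered as the infimum.\<close>
definition Cp :: "(real \<Rightarrow> real) \<Rightarrow> (real \<Rightarrow> real) \<Rightarrow> nat \<Rightarrow> real" where
  "Cp f C0 p = (INF \<xi>\<in>{0<..}. Cpx f C0 p \<xi>)"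

end

theory Submission
  imports Defs
begin

lemma lnp_top: "filterlim (\<lambda>p::nat. ln (real p)) at_top sequentially"
  by (rule filterlim_compose[OF ln_at_top filterlim_real_sequentially])

lemma const_div_lnp: "((\<lambda>p::nat. c / ln (real p)) \<longlongrightarrow> 0) sequentially"
  by (rule tendsto_divide_0[OF tendsto_const filterlim_at_top_imp_at_infinity[OF lnp_top]])

lemma Cpx_basic:
  assumes p: "real p \<ge> 2" and fx: "f \<xi> \<ge> 1" and xp: "\<xi> > 0"
  defines "q \<equiv> real p powr (- f \<xi>)"
  defines "u \<equiv> (1 - q) powr exp \<xi>"
  shows "0 < q" "q \<le> 1 / real p" "q \<le> 1/2" "0 < u" "u < 1"
    "Cpx f g p \<xi> = g \<xi> / (2 * (1 - u) * u)"
proof -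
  show q0: "0 < q" using p by (simp add: q_def)
  have "real p powr (- f \<xi>) \<le> real p powr (-1)"
    using p fx by (intro powr_mono) auto
  then show q1: "q \<le> 1 / real p" using p by (simp add: q_def powr_minus_divide)
  also have "1 / real p \<le> 1/2" using p by (simp add: field_simps)
  finally show q2: "q \<le> 1/2" .
  show "0 < u" using q2 by (simp add: u_def)
  have "(1 - q) powr exp \<xi> < 1 powr exp \<xi>" using q0 q2 by (intro powr_less_mono2) auto
  then show "u < 1" by (simp add: u_def)
  show "Cpx f g p \<xi> = g \<xi> / (2 * (1 - u) * u)"
    by (simp add: Cpx_def u_def q_def)
qed

lemma Cpx_lower:
  assumes p: "real p \<ge> 2" and fx: "f \<xi> \<ge> 1" and xp: "\<xi> > 0" and c: "C0 \<xi> > 0"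
  shows "Cpx f C0 p \<xi> \<ge> 2 * C0 \<xi>"
proof -
  define u where "u = (1 - real p powr (- f \<xi>)) powr exp \<xi>"
  note B = Cpx_basic[where p=p and f=f and \<xi>=\<xi>, OF p fx xp, folded u_def]
  note B6 = Cpx_basic(6)[where p=p and f=f and \<xi>=\<xi> and g=C0, OF p fx xp, folded u_def]
  have d0: "0 < 2 * (1 - u) * u" using B by simp
  have d1: "2 * (1 - u) * u \<le> 1/2"
    using sum_squares_ge_zero[of "2*u-1" 0] by (simp add: algebra_simps power2_eq_square)
  have "C0 \<xi> / (1/2) \<le> C0 \<xi> / (2 * (1 - u) * u)"
    using d0 d1 c by (intro divide_left_mono) auto
  then show ?thesis using B6 by simp
qed

lemma Cpx_nonneg:
  assumes p: "real p \<ge> 2" and fx: "f \<xi> \<ge> 1" and xp: "\<xi> > 0" and c: "C0 \<xi> > 0"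
  shows "Cpx f C0 p \<xi> \<ge> 0"
  using Cpx_lower[of p f \<xi> C0, OF assms] c by linarith

lemma Cp_le:
  assumes p: "real p \<ge> 2" and f1: "\<forall>\<xi>>0. f \<xi> \<ge> 1" and c: "\<forall>\<xi>>0. C0 \<xi> > 0"
    and xp: "\<xi> > 0"
  shows "Cp f C0 p \<le> Cpx f C0 p \<xi>"
  unfolding Cp_def
proof (rule cINF_lower)
  show "bdd_below (Cpx f C0 p ` {0<..})"
    using Cpx_nonneg[OF p] f1 c by (intro bdd_belowI[of _ 0]) auto
qed (use xp in auto)

lemma Cp_ge:
  assumes p: "real p \<ge> 2" and f1: "\<forall>\<xi>>0. f \<xi> \<ge> 1" and c: "\<forall>\<xi>>0. C0 \<xi> > 0"
    and e: "\<forall>\<xi>>0. C0 \<xi> \<ge> e"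
  shows "Cp f C0 p \<ge> 2 * e"
  unfolding Cp_def
proof (rule cINF_greatest)
  fix x :: real assume "x \<in> {0<..}"
  then show "2 * e \<le> Cpx f C0 p x" using Cpx_lower[OF p, of f x C0] f1 c e by force
qed auto

lemma Cp_nonneg:
  assumes p: "real p \<ge> 2" and f1: "\<forall>\<xi>>0. f \<xi> \<ge> 1" and c: "\<forall>\<xi>>0. C0 \<xi> > 0"
  shows "Cp f C0 p \<ge> 0"
  using Cp_ge[OF p f1 c, of 0] c by (simp add: less_imp_le)

lemma xi0_facts:
  assumes p: "real p \<ge> 2" and fx: "f \<xi> \<ge> 1" and xp: "\<xi> > 0"
    and eq: "\<xi> = ln (- ln 2 / ln (1 - real p powr (- f \<xi>)))"
  shows "Cpx f g p \<xi> = 2 * g \<xi>" "\<xi> \<le> f \<xi> * ln (real p)"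
    "ln (real p) + ln (ln 2 / 2) \<le> \<xi>"
proof -
  define q where "q = real p powr (- f \<xi>)"
  define u where "u = (1 - q) powr exp \<xi>"
  note B = Cpx_basic[where p=p and f=f and \<xi>=\<xi>, OF p fx xp, folded q_def u_def]
  note B6 = Cpx_basic(6)[where p=p and f=f and \<xi>=\<xi> and g=g, OF p fx xp, folded q_def u_def]
  have lq: "ln (1 - q) < 0" using B by simp
  define y where "y = - ln 2 / ln (1 - q)"
  have y0: "y > 0" using lq by (simp add: y_def divide_pos_neg)
  have "\<xi> = ln y" using eq by (simp add: y_def q_def)
  then have ey: "exp \<xi> = y" using y0 by simp
  have "u = exp (y * ln (1 - q))" using B by (simp add: u_def powr_def ey)
  also have "y * ln (1 - q) = - ln 2" using lq by (simp add: y_def)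
  finally have u2: "u = 1/2" by (simp add: exp_minus)
  have "Cpx f g p \<xi> = g \<xi> / (2 * (1 - u) * u)" unfolding u_def by (rule B6)
  also have "\<dots> = 2 * g \<xi>" unfolding u2 by simp
  finally show "Cpx f g p \<xi> = 2 * g \<xi>" .
  have a1: "ln (1 - q) \<le> - q" using ln_le_minus_one[of "1 - q"] B by simp
  have yeq: "y = ln 2 / (- ln (1 - q))" by (simp add: y_def)
  also have "\<dots> \<le> ln 2 / q" using a1 lq B mult_neg_pos[OF lq B(1)] by (intro divide_left_mono) auto
  finally have "y \<le> ln 2 / q" .
  then have "y \<le> ln 2 / q" .
  also have "\<dots> \<le> 1 / q" using B ln_2_less_1 by (simp add: divide_simps)
  also have "1 / q = real p powr f \<xi>" by (simp add: q_def powr_minus_divide)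
  finally have "y \<le> real p powr f \<xi>" .
  then have "ln y \<le> ln (real p powr f \<xi>)" by (rule ln_mono) (use y0 in auto)
  then show "\<xi> \<le> f \<xi> * ln (real p)" using ey y0 by (metis ln_exp ln_powr)
  have a2: "- ln (1 - q) \<le> 2 * q"
  proof -
    have "- ln (1 - q) = ln (1 / (1 - q))" using B by (simp add: ln_div)
    also have "\<dots> \<le> 1 / (1 - q) - 1" using B by (intro ln_le_minus_one) simp
    also have "\<dots> = q / (1 - q)" using B by (simp add: field_simps)
    also have "\<dots> \<le> 2 * q" using B by (simp add: field_simps)
    finally show ?thesis .
  qed
  have "ln 2 / 2 * real p \<le> ln 2 / (2 * q)"
    using B p by (simp add: field_simps)
  also have "\<dots> \<le> y" unfolding yeq using a2 lq B mult_pos_pos[of "2 * q" "- ln (1 - q)"]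
    by (intro divide_left_mono) auto
  finally have "ln (ln 2 / 2 * real p) \<le> ln y" using p by (intro ln_mono) auto
  moreover have "ln (ln 2 / 2 * real p) = ln (ln 2 / 2) + ln (real p)"
    using p by (intro ln_mult_pos) auto
  moreover have "ln y = \<xi>" using ey by (metis ln_exp)
  ultimately show "ln (real p) + ln (ln 2 / 2) \<le> \<xi>" by linarith
qed

lemma small_xi:
  assumes p: "real p \<ge> 6" and fx: "f \<xi> \<ge> 1" and xp: "\<xi> > 0" and x1: "\<xi> < 1"
    and f1: "f \<xi> \<le> f 1" and gp: "g \<xi> > 0"
  shows "Cpx f g p \<xi> \<le> g \<xi> * real p powr f 1"
proof -
  have p2: "real p \<ge> 2" using p by simp
  define q where "q = real p powr (- f \<xi>)"
  define u where "u = (1 - q) powr exp \<xi>"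
  note B = Cpx_basic[where p=p and f=f and \<xi>=\<xi>, OF p2 fx xp, folded q_def u_def]
  note B6 = Cpx_basic(6)[where p=p and f=f and \<xi>=\<xi> and g=g, OF p2 fx xp, folded q_def u_def]
  have "1 / real p \<le> 1 / 6" using p by (intro divide_left_mono) auto
  then have q6: "q \<le> 1/6" using B(2) by linarith
  have "exp \<xi> \<le> exp 1" using x1 by simp
  then have e3: "exp \<xi> \<le> 3" using exp_le by linarith
  have "(1 - q) powr 3 \<le> u" unfolding u_def using B e3 by (intro powr_mono') auto
  moreover have "(1 - q) powr 3 = (1 - q) ^ 3" using B by (subst powr_realpow[symmetric]) auto
  moreover have "1 + real 3 * (- q) \<le> (1 + (- q)) ^ 3" using B by (intro Bernoulli_inequality) auto
  ultimately have u1: "u \<ge> 1/2" using q6 by simp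
  have "u \<le> (1 - q) powr 1" unfolding u_def using B xp by (intro powr_mono') auto
  then have u2: "1 - u \<ge> q" using B by simp
  have "q \<le> 2 * (1 - u) * u"
  proof -
    have "q * 1 \<le> (1 - u) * (2 * u)" using u1 u2 B by (intro mult_mono) auto
    then show ?thesis by (simp add: algebra_simps)
  qed
  then have "g \<xi> / (2 * (1 - u) * u) \<le> g \<xi> / q"
    using B gp by (intro divide_left_mono) auto
  also have "g \<xi> / q = g \<xi> * real p powr f \<xi>" by (simp add: q_def powr_minus_divide)
  also have "\<dots> \<le> g \<xi> * real p powr f 1" using gp p f1 by (intro mult_left_mono powr_mono) auto
  finally have "g \<xi> / (2 * (1 - u) * u) \<le> g \<xi> * real p powr f 1" .
  moreover have "Cpx f g p \<xi> = g \<xi> / (2 * (1 - u) * u)" unfolding u_def by (rule B6)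
  ultimately show ?thesis by simp
qed

theorem lemma2:
  fixes f C0 :: "real \<Rightarrow> real"
  assumes f_ge1: "\<forall>\<xi>>0. f \<xi> \<ge> 1"
    and f_mono: "mono_on {0<..} f"
    and C0_pos: "\<forall>\<xi>>0. C0 \<xi> > 0"
    and C0_mono: "mono_on {0<..} C0"
    and xi0: "\<forall>\<^sub>F p in sequentially.
                \<exists>\<xi>0>0. \<xi>0 = ln (- ln 2 / ln (1 - real p powr (- f \<xi>0)))"
  shows "(((\<lambda>\<xi>. f \<xi> * ln (C0 \<xi>) / \<xi>) \<longlongrightarrow> 0) at_top
            \<longrightarrow> ((\<lambda>p. ln (Cp f C0 p) / ln (real p)) \<longlongrightarrow> 0) sequentially)
       \<and> (((\<exists>K' a. K' > 0 \<and> a > 0 \<and> (\<forall>\<^sub>F \<xi> in at_top. C0 \<xi> \<le> K' * \<xi> powr a))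
            \<and> (\<exists>K \<beta>. K > 0 \<and> 0 \<le> \<beta> \<and> \<beta> < 1 \<and> (\<forall>\<^sub>F \<xi> in at_top. f \<xi> \<le> K * \<xi> powr \<beta>)))
          \<longrightarrow> (\<exists>A (n::nat). \<forall>\<^sub>F p in sequentially. Cp f C0 p \<le> A * ln (real p) ^ n))"
proof -
  define X where "X p = (SOME \<xi>. \<xi> > 0 \<and> \<xi> = ln (- ln 2 / ln (1 - real p powr (- f \<xi>))))" for p :: nat
  have evX: "\<forall>\<^sub>F p in sequentially. X p > 0 \<and> X p = ln (- ln 2 / ln (1 - real p powr (- f (X p))))"
    using xi0 unfolding X_def by (rule eventually_mono) (rule someI_ex, blast)
  define P where "P p \<longleftrightarrow> real p \<ge> 6 \<and> Cp f C0 p \<le> 2 * C0 (X p) \<and> X p > 0 \<and>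
     X p \<le> f (X p) * ln (real p) \<and> ln (real p) + ln (ln 2 / 2) \<le> X p \<and> ln (real p) \<ge> 1
     \<and> Cp f C0 p \<ge> 0" for p
  have evP: "\<forall>\<^sub>F p in sequentially. P p"
    using evX eventually_ge_at_top[of "6::nat"]
  proof eventually_elim
    case (elim p)
    then have p6: "real p \<ge> 6" by simp
    then have p2: "real p \<ge> 2" by simp
    from elim have x0: "X p > 0" by simp
    have fx: "f (X p) \<ge> 1" using f_ge1 x0 by simp
    note F = xi0_facts[where p=p and f=f and \<xi>="X p", OF p2 fx x0]
    have F1: "Cpx f C0 p (X p) = 2 * C0 (X p)" using elim by (intro F) auto
    have "Cp f C0 p \<le> Cpx f C0 p (X p)" by (rule Cp_le[OF p2 f_ge1 C0_pos x0])
    moreover have "ln (real p) \<ge> 1" using p6 exp_le by (subst ln_ge_iff) auto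
    ultimately show ?case unfolding P_def using F elim F1 Cp_nonneg[OF p2 f_ge1 C0_pos] by auto
  qed
  have limX: "filterlim X at_top sequentially"
  proof (rule filterlim_at_top_mono)
    show "filterlim (\<lambda>p::nat. ln (real p) + ln (ln 2 / 2)) at_top sequentially"
      using filterlim_tendsto_add_at_top[OF tendsto_const lnp_top, of "ln (ln 2 / 2)"] by (simp add: add.commute)
    show "\<forall>\<^sub>F p in sequentially. ln (real p) + ln (ln 2 / 2) \<le> X p"
      using evP by (rule eventually_mono) (simp add: P_def)
  qed
  have part1: "((\<lambda>p. ln (Cp f C0 p) / ln (real p)) \<longlongrightarrow> 0) sequentially"
    if G: "((\<lambda>\<xi>. f \<xi> * ln (C0 \<xi>) / \<xi>) \<longlongrightarrow> 0) at_top"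
  proof -
    define G where "G \<xi> = f \<xi> * ln (C0 \<xi>) / \<xi>" for \<xi>
    have GX: "((\<lambda>p. max 0 (G (X p))) \<longlongrightarrow> 0) sequentially"
    proof -
      have "((\<lambda>p. G (X p)) \<longlongrightarrow> 0) sequentially"
        using filterlim_compose[OF G limX] unfolding G_def by simp
      then have "((\<lambda>p. max 0 (G (X p))) \<longlongrightarrow> max 0 0) sequentially"
        by (intro tendsto_max tendsto_const)
      then show ?thesis by simp
    qed
    have M: "((\<lambda>p. max 0 (ln (C0 (X p))) / ln (real p)) \<longlongrightarrow> 0) sequentially"
    proof (rule tendsto_sandwich[OF _ _ tendsto_const GX])
      show "\<forall>\<^sub>F p in sequentially. 0 \<le> max 0 (ln (C0 (X p))) / ln (real p)"
        using evP by (rule eventually_mono) (simp add: P_def)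
      show "\<forall>\<^sub>F p in sequentially. max 0 (ln (C0 (X p))) / ln (real p) \<le> max 0 (G (X p))"
        using evP
      proof (rule eventually_mono)
        fix p assume "P p"
        then have l1: "ln (real p) \<ge> 1" and x0: "X p > 0" and xl: "X p \<le> f (X p) * ln (real p)"
          by (auto simp: P_def)
        show "max 0 (ln (C0 (X p))) / ln (real p) \<le> max 0 (G (X p))"
        proof (cases "ln (C0 (X p)) \<le> 0")
          case True then show ?thesis by simp
        next
          case False
          have "ln (C0 (X p)) * X p \<le> ln (C0 (X p)) * (f (X p) * ln (real p))"
            using False xl by (intro mult_left_mono) auto
          then have "ln (C0 (X p)) / ln (real p) \<le> G (X p)"
            unfolding G_def using l1 x0 by (simp add: divide_simps mult_ac)
          then show ?thesis using False by simp
        qed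
      qed
    qed
    define h where "h p = ln 2 / ln (real p) + max 0 (ln (C0 (X p))) / ln (real p)" for p :: nat
    have hl: "(h \<longlongrightarrow> 0) sequentially"
    proof -
      have "((\<lambda>p::nat. ln 2 / ln (real p)) \<longlongrightarrow> 0) sequentially" by (rule const_div_lnp)
      from tendsto_add[OF this M] show ?thesis unfolding h_def by simp
    qed
    have up: "\<forall>\<^sub>F p in sequentially. ln (Cp f C0 p) / ln (real p) \<le> h p"
      using evP
    proof (rule eventually_mono)
      fix p assume "P p"
      then have l1: "ln (real p) \<ge> 1" and x0: "X p > 0" and c2: "Cp f C0 p \<le> 2 * C0 (X p)"
        and c0: "Cp f C0 p \<ge> 0"
        by (auto simp: P_def)
      have cx: "C0 (X p) > 0" using C0_pos x0 by simp
      have "ln (Cp f C0 p) \<le> ln 2 + max 0 (ln (C0 (X p)))"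
      proof (cases "Cp f C0 p = 0")
        case True then show ?thesis by simp
      next
        case False
        then have "ln (Cp f C0 p) \<le> ln (2 * C0 (X p))" using c0 c2 by (intro ln_mono) auto
        also have "\<dots> = ln 2 + ln (C0 (X p))" using cx by (simp add: ln_mult)
        finally show ?thesis by simp
      qed
      then have "ln (Cp f C0 p) / ln (real p) \<le> (ln 2 + max 0 (ln (C0 (X p)))) / ln (real p)"
        using l1 by (intro divide_right_mono) auto
      then show "ln (Cp f C0 p) / ln (real p) \<le> h p" unfolding h_def by (simp add: add_divide_distrib)
    qed
    have "\<exists>L. \<forall>\<^sub>F p in sequentially. L / ln (real p) \<le> ln (Cp f C0 p) / ln (real p)"
    proof (cases "\<exists>e>0. \<forall>\<xi>>0. e \<le> C0 \<xi>")
      case True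
      then obtain e where e0: "e > 0" and e: "\<forall>\<xi>>0. e \<le> C0 \<xi>" by blast
      show ?thesis
      proof (rule exI[of _ "ln (2 * e)"], use evP in \<open>rule eventually_mono\<close>)
        fix p assume "P p"
        then have l1: "ln (real p) \<ge> 1" and p2: "real p \<ge> 2" by (auto simp: P_def)
        have "2 * e \<le> Cp f C0 p" by (rule Cp_ge[OF p2 f_ge1 C0_pos e])
        then have "ln (2 * e) \<le> ln (Cp f C0 p)" using e0 by (intro ln_mono) auto
        then show "ln (2 * e) / ln (real p) \<le> ln (Cp f C0 p) / ln (real p)"
          using l1 by (intro divide_right_mono) auto
      qed
    next
      case False
      then have small: "\<forall>e>0. \<exists>\<xi>>0. C0 \<xi> < e" by (auto simp: not_le)
      show ?thesis
      proof (rule exI[of _ 0], use evP in \<open>rule eventually_mono\<close>)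
        fix p assume "P p"
        then have p6: "real p \<ge> 6" and p2: "real p \<ge> 2" and c0: "Cp f C0 p \<ge> 0"
          by (auto simp: P_def)
        have "Cp f C0 p = 0"
        proof (rule ccontr)
          assume "Cp f C0 p \<noteq> 0"
          with c0 have cpos: "Cp f C0 p > 0" by simp
          define M where "M = real p powr f 1"
          have M0: "M > 0" using p2 by (simp add: M_def)
          obtain \<xi> where x0: "\<xi> > 0" and cx: "C0 \<xi> < Cp f C0 p / M"
            using small cpos M0 by (meson divide_pos_pos)
          define \<eta> where "\<eta> = min \<xi> (1/2)"
          have e0: "\<eta> > 0" "\<eta> < 1" using x0 by (auto simp: \<eta>_def)
          have ex: "\<eta> \<le> \<xi>" by (simp add: \<eta>_def)
          have "C0 \<eta> \<le> C0 \<xi>" by (rule mono_onD[OF C0_mono _ _ ex]) (use x0 e0 in auto)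
          have fe: "f \<eta> \<le> f 1" by (rule mono_onD[OF f_mono]) (use e0 in auto)
          have "Cp f C0 p \<le> Cpx f C0 p \<eta>" by (rule Cp_le[OF p2 f_ge1 C0_pos e0(1)])
          also have "\<dots> \<le> C0 \<eta> * M" unfolding M_def
            using small_xi[where p=p and f=f and \<xi>=\<eta> and g=C0] p6 f_ge1 C0_pos e0 fe by auto
          also have "\<dots> \<le> C0 \<xi> * M" using \<open>C0 \<eta> \<le> C0 \<xi>\<close> M0 by simp
          also have "\<dots> < Cp f C0 p" using cx M0 by (simp add: field_simps)
          finally show False by simp
        qed
        then show "0 / ln (real p) \<le> ln (Cp f C0 p) / ln (real p)" by simp
      qed
    qed
    then obtain L where L: "\<forall>\<^sub>F p in sequentially. L / ln (real p) \<le> ln (Cp f C0 p) / ln (real p)"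
      by blast
    have "((\<lambda>p::nat. L / ln (real p)) \<longlongrightarrow> 0) sequentially" by (rule const_div_lnp)
    from tendsto_sandwich[OF L up this hl] show ?thesis .
  qed
  have part2: "\<exists>A (n::nat). \<forall>\<^sub>F p in sequentially. Cp f C0 p \<le> A * ln (real p) ^ n"
    if K1: "K' > 0" "a > 0" "\<forall>\<^sub>F \<xi> in at_top. C0 \<xi> \<le> K' * \<xi> powr a"
     and K2: "K > 0" "0 \<le> \<beta>" "\<beta> < 1" "\<forall>\<^sub>F \<xi> in at_top. f \<xi> \<le> K * \<xi> powr \<beta>"
    for K' a K \<beta> :: real
  proof -
    define r where "r = a / (1 - \<beta>)"
    have r0: "r > 0" using K1 K2 by (simp add: r_def)
    define n where "n = nat \<lceil>r\<rceil>"
    have rn: "r \<le> real n" unfolding n_def by linarith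
    have ev1: "\<forall>\<^sub>F p in sequentially. C0 (X p) \<le> K' * X p powr a"
      using filterlim_iff[THEN iffD1, OF limX] K1(3) by blast
    have ev2: "\<forall>\<^sub>F p in sequentially. f (X p) \<le> K * X p powr \<beta>"
      using filterlim_iff[THEN iffD1, OF limX] K2(4) by blast
    show ?thesis
    proof (rule exI[of _ "2 * K' * K powr r"], rule exI[of _ n])
      show "\<forall>\<^sub>F p in sequentially. Cp f C0 p \<le> 2 * K' * K powr r * ln (real p) ^ n"
        using evP ev1 ev2
      proof eventually_elim
        case (elim p)
        then have l1: "ln (real p) \<ge> 1" and x0: "X p > 0" and xl: "X p \<le> f (X p) * ln (real p)"
          and c2: "Cp f C0 p \<le> 2 * C0 (X p)" by (auto simp: P_def)
        have "X p \<le> K * X p powr \<beta> * ln (real p)"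
          using order_trans[OF xl mult_right_mono[OF elim(3)]] l1 by simp
        then have "X p / X p powr \<beta> \<le> K * ln (real p)"
          using x0 by (simp add: divide_simps mult_ac)
        then have xb: "X p powr (1 - \<beta>) \<le> K * ln (real p)" using x0 by (simp add: powr_diff)
        have "X p powr a = (X p powr (1 - \<beta>)) powr r"
          using K2 by (simp add: powr_powr r_def)
        also have "\<dots> \<le> (K * ln (real p)) powr r" using xb r0 by (intro powr_mono2) auto
        also have "\<dots> = K powr r * ln (real p) powr r" using K2 l1 by (simp add: powr_mult)
        also have "\<dots> \<le> K powr r * ln (real p) powr (real n)"
          using l1 rn by (intro mult_left_mono powr_mono) auto
        also have "ln (real p) powr (real n) = ln (real p) ^ n" using l1 by (intro powr_realpow) auto
        finally have "X p powr a \<le> K powr r * ln (real p) ^ n" .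
        then have "K' * X p powr a \<le> K' * (K powr r * ln (real p) ^ n)"
          using K1 by (intro mult_left_mono) auto
        then show ?case using c2 elim(2) by (simp add: mult_ac)
      qed
    qed
  qed
  show ?thesis using part1 part2 by blast
qed

end
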